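(* Let $G=(V,w,m)$ be a finite connected weighted graph satisfying $CD(K,\infty)$ for some $K>0$, let $0=\lambda_0<\lambda_1\le\lambda_2\le\dots$ be the eigenvalues of $-\Delta$ counted with multiplicity, let $x\in V$ and suppose $\lambda_{\deg(x)}=K$. Let $f:V\to\mathbb R$ satisfy $\Delta f(x)=-Kf(x)$ at the point $x$. Then there is $\varphi:V\to\mathbb R$ with $-\Delta\varphi=K\varphi$ on $V$ and $\varphi=f$ on $B_1(x)$.
   Context: A weighted graph is $G=(V,w,m)$ with $V$ countable, $w:V\times V\to[0,\infty)$ symmetric with $w(x,x)=0$, $m:V\to(0,\infty)$; $x\sim y$ iff $w(x,y)>0$. Laplacian $\Delta f(x)=\frac1{m(x)}\sum_yw(x,y)(f(y)-f(x))$, self-adjoint on $\ell^2(V,m)$. $\deg(x)=\#\{y:y\sim x\}$. $B_1(x)=\{x\}\cup\{y:y\sim x\}$. $2\Gamma(f,g)=\Delta(fg)-f\Delta g-g\Delta f$, $2\Gamma_2(f,g)=\Delta\Gamma(f,g)-\Gamma(f,\Delta g)-\Gamma(g,\Delta f)$, $\Gamma f=\Gamma(f,f)$, $\Gamma_2f=\Gamma_2(f,f)$; $CD(K,\infty)$ means $\Gamma_2f(y)\ge K\Gamma f(y)$ for all $f$ and $y$. *)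

theory Defs
  imports "HOL-Analysis.Analysis" "HOL-Library.Multiset"
begin

definition weighted_graph :: "('v \<Rightarrow> 'v \<Rightarrow> real) \<Rightarrow> ('v \<Rightarrow> real) \<Rightarrow> bool" where
  "weighted_graph w m \<longleftrightarrow>
     (\<forall>x y. w x y \<ge> 0) \<and> (\<forall>x y. w x y = w y x) \<and> (\<forall>x. w x x = 0) \<and> (\<forall>x. m x > 0)"

definition adj :: "('v \<Rightarrow> 'v \<Rightarrow> real) \<Rightarrow> 'v \<Rightarrow> 'v \<Rightarrow> bool" where
  "adj w x y \<longleftrightarrow> w x y > 0"

definition connected_graph :: "('v \<Rightarrow> 'v \<Rightarrow> real) \<Rightarrow> bool" where
  "connected_graph w \<longleftrightarrow> (\<forall>x y. (adj w)\<^sup>*\<^sup>* x y)"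

definition deg :: "('v::finite \<Rightarrow> 'v \<Rightarrow> real) \<Rightarrow> 'v \<Rightarrow> nat" where
  "deg w x = card {y. adj w y x}"

definition ball1 :: "('v \<Rightarrow> 'v \<Rightarrow> real) \<Rightarrow> 'v \<Rightarrow> 'v set" where
  "ball1 w x = {x} \<union> {y. adj w y x}"

definition Lap :: "('v::finite \<Rightarrow> 'v \<Rightarrow> real) \<Rightarrow> ('v \<Rightarrow> real) \<Rightarrow> ('v \<Rightarrow> real) \<Rightarrow> 'v \<Rightarrow> real" where
  "Lap w m f x = (1 / m x) * (\<Sum>y\<in>UNIV. w x y * (f y - f x))"

definition Gam :: "('v::finite \<Rightarrow> 'v \<Rightarrow> real) \<Rightarrow> ('v \<Rightarrow> real) \<Rightarrow> ('v \<Rightarrow> real) \<Rightarrow> ('v \<Rightarrow> real) \<Rightarrow> 'v \<Rightarrow> real" where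
  "Gam w m f g x = (Lap w m (\<lambda>z. f z * g z) x - f x * Lap w m g x - g x * Lap w m f x) / 2"

definition Gam2 :: "('v::finite \<Rightarrow> 'v \<Rightarrow> real) \<Rightarrow> ('v \<Rightarrow> real) \<Rightarrow> ('v \<Rightarrow> real) \<Rightarrow> ('v \<Rightarrow> real) \<Rightarrow> 'v \<Rightarrow> real" where
  "Gam2 w m f g x = (Lap w m (Gam w m f g) x - Gam w m f (Lap w m g) x - Gam w m g (Lap w m f) x) / 2"

definition CD_inf :: "('v::finite \<Rightarrow> 'v \<Rightarrow> real) \<Rightarrow> ('v \<Rightarrow> real) \<Rightarrow> real \<Rightarrow> bool" where
  "CD_inf w m K \<longleftrightarrow> (\<forall>f y. Gam2 w m f f y \<ge> K * Gam w m f f y)"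

definition eigspace :: "('v::finite \<Rightarrow> 'v \<Rightarrow> real) \<Rightarrow> ('v \<Rightarrow> real) \<Rightarrow> real \<Rightarrow> (real^'v) set" where
  "eigspace w m \<mu> = {v. \<forall>x. - Lap w m (vec_nth v) x = \<mu> * v $ x}"

definition is_eigenvalue :: "('v::finite \<Rightarrow> 'v \<Rightarrow> real) \<Rightarrow> ('v \<Rightarrow> real) \<Rightarrow> real \<Rightarrow> bool" where
  "is_eigenvalue w m \<mu> \<longleftrightarrow> (\<exists>f. f \<noteq> (\<lambda>_. 0) \<and> (\<forall>x. - Lap w m f x = \<mu> * f x))"

text \<open>Multiset of eigenvalues of -Lap, each repeated according to its multiplicity
  (dimension of the eigenspace; -Lap is self-adjoint on l^2(V,m)).\<close>
definition eig_mset :: "('v::finite \<Rightarrow> 'v \<Rightarrow> real) \<Rightarrow> ('v \<Rightarrow> real) \<Rightarrow> real multiset" where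
  "eig_mset w m = (\<Sum>\<mu>\<in>{\<mu>. is_eigenvalue w m \<mu>}. replicate_mset (dim (eigspace w m \<mu>)) \<mu>)"

definition eigval :: "('v::finite \<Rightarrow> 'v \<Rightarrow> real) \<Rightarrow> ('v \<Rightarrow> real) \<Rightarrow> nat \<Rightarrow> real" where
  "eigval w m k = sorted_list_of_multiset (eig_mset w m) ! k"

end

theory Submission
  imports Defs
begin
lemma wg: assumes "weighted_graph w m" shows "w x y \<ge> 0" "w x y = w y x" "w x x = 0" "m x > 0"
  using assms unfolding weighted_graph_def by auto

lemma Lap_lin: "Lap w m (\<lambda>y. a * f y + b * g y) x = a * Lap w m f x + b * Lap w m g x"
proof -
  have "(\<Sum>y\<in>UNIV. w x y * ((a * f y + b * g y) - (a * f x + b * g x))) = a*(\<Sum>y\<in>UNIV. w x y * (f y - f x)) + b*(\<Sum>y\<in>UNIV. w x y * (g y - g x))"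
    by (simp add: sum_distrib_left sum.distrib[symmetric] algebra_simps)
  then show ?thesis unfolding Lap_def by (simp add: algebra_simps)
qed

lemma Gam_eq: "Gam w m f g x = (\<Sum>y\<in>UNIV. w x y * (f y - f x) * (g y - g x)) / (2 * m x)"
proof -
  have "(\<Sum>y\<in>UNIV. w x y * (f y * g y - f x * g x)) - f x * (\<Sum>y\<in>UNIV. w x y * (g y - g x)) - g x * (\<Sum>y\<in>UNIV. w x y * (f y - f x))
     = (\<Sum>y\<in>UNIV. w x y * (f y - f x) * (g y - g x))"
    by (simp add: sum_distrib_left sum_subtractf[symmetric] algebra_simps)
  moreover have "\<And>mm a b c d e::real. (1/mm*a - b*(1/mm*c) - d*(1/mm*e))/2 = (a - b*c - d*e)/(2*mm)"
    by (case_tac "mm = 0") (simp_all add: field_simps)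
  ultimately show ?thesis unfolding Gam_def Lap_def by metis
qed

lemma ibp: assumes G: "weighted_graph w m"
  shows "(\<Sum>y\<in>UNIV. m y * Lap w m f y * g y) = - (\<Sum>y\<in>UNIV. \<Sum>z\<in>UNIV. w y z * (f z - f y) * (g z - g y)) / 2"
proof -
  have 1: "(\<Sum>y\<in>UNIV. m y * Lap w m f y * g y) = (\<Sum>y\<in>UNIV. \<Sum>z\<in>UNIV. w y z * (f z - f y) * g y)"
  proof (intro sum.cong refl)
    fix y
    have "m y \<noteq> 0" using wg(4)[OF G, of y] by simp
    then show "m y * Lap w m f y * g y = (\<Sum>z\<in>UNIV. w y z * (f z - f y) * g y)"
      unfolding Lap_def by (simp add: sum_distrib_right)
  qed
  have "(\<Sum>y\<in>UNIV. \<Sum>z\<in>UNIV. w y z * (f z - f y) * g y) = (\<Sum>z\<in>UNIV. \<Sum>y\<in>UNIV. w y z * (f z - f y) * g y)"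
    by (rule sum.swap)
  also have "\<dots> = (\<Sum>y\<in>UNIV. \<Sum>z\<in>UNIV. w y z * (f y - f z) * g z)"
    by (intro sum.cong refl) (metis wg(2)[OF G])
  finally have 2: "(\<Sum>y\<in>UNIV. \<Sum>z\<in>UNIV. w y z * (f z - f y) * g y) = (\<Sum>y\<in>UNIV. \<Sum>z\<in>UNIV. w y z * (f y - f z) * g z)" .
  have 3: "(\<Sum>y\<in>UNIV. \<Sum>z\<in>UNIV. w y z * (f z - f y) * (g z - g y)) = (\<Sum>y\<in>UNIV. \<Sum>z\<in>UNIV. w y z * (f z - f y) * g z) - (\<Sum>y\<in>UNIV. \<Sum>z\<in>UNIV. w y z * (f z - f y) * g y)"
    by (simp add: sum_subtractf[symmetric] algebra_simps)
  have 4: "(\<Sum>y\<in>UNIV. \<Sum>z\<in>UNIV. w y z * (f y - f z) * g z) = - (\<Sum>y\<in>UNIV. \<Sum>z\<in>UNIV. w y z * (f z - f y) * g z)"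
    by (simp add: sum_negf[symmetric] algebra_simps)
  show ?thesis using 1 2 3 4 by linarith
qed

lemma sum_Lap: assumes G: "weighted_graph w m" shows "(\<Sum>y\<in>UNIV. m y * Lap w m f y) = 0"
  using ibp[OF G, of f "\<lambda>_. 1"] by simp

definition En :: "('v::finite \<Rightarrow> 'v \<Rightarrow> real) \<Rightarrow> ('v \<Rightarrow> real) \<Rightarrow> real" where
  "En w f = (\<Sum>y\<in>UNIV. \<Sum>z\<in>UNIV. w y z * (f z - f y)^2)"

lemma ibp_self: assumes G: "weighted_graph w m" shows "(\<Sum>y\<in>UNIV. m y * Lap w m f y * f y) = - En w f / 2"
  using ibp[OF G, of f f] unfolding En_def by (simp add: power2_eq_square mult.assoc)

lemma En_nonneg: assumes G: "weighted_graph w m" shows "En w f \<ge> 0"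
  unfolding En_def using wg(1)[OF G] by (intro sum_nonneg) simp

lemma sum_Gam: assumes G: "weighted_graph w m" shows "(\<Sum>y\<in>UNIV. m y * Gam w m f f y) = En w f / 2"
proof -
  have "(\<Sum>y\<in>UNIV. m y * Gam w m f f y) = (\<Sum>y\<in>UNIV. (\<Sum>z\<in>UNIV. w y z * (f z - f y)^2) / 2)"
  proof (intro sum.cong refl)
    fix y
    have "m y \<noteq> 0" using wg(4)[OF G, of y] by simp
    then show "m y * Gam w m f f y = (\<Sum>z\<in>UNIV. w y z * (f z - f y)^2) / 2"
      unfolding Gam_eq by (simp add: power2_eq_square mult.assoc)
  qed
  then show ?thesis unfolding En_def by (simp add: sum_divide_distrib)
qed

lemma Gam_nonneg: assumes G: "weighted_graph w m" shows "Gam w m f f y \<ge> 0"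
  unfolding Gam_eq using wg[OF G]
  by (intro divide_nonneg_pos sum_nonneg) (auto simp: mult.assoc)

lemma En_zero_const: assumes G: "weighted_graph w m" and C: "connected_graph w" and E: "En w f = 0"
  shows "f a = f b"
proof -
  have "\<forall>y\<in>UNIV. (\<Sum>z\<in>UNIV. w y z * (f z - f y)^2) = 0"
    using E unfolding En_def
    by (subst sum_nonneg_eq_0_iff[symmetric]) (auto intro!: sum_nonneg simp: wg(1)[OF G])
  then have "\<And>y z. w y z * (f z - f y)^2 = 0"
    using wg(1)[OF G] by (subst (asm) sum_nonneg_eq_0_iff) auto
  then have step: "\<And>y z. adj w y z \<Longrightarrow> f y = f z" unfolding adj_def
    by (metis less_irrefl mult_eq_0_iff power_eq_0_iff right_minus_eq)
  have "(adj w)\<^sup>*\<^sup>* a b" using C unfolding connected_graph_def by auto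
  then show ?thesis by induct (auto dest: step)
qed

lemma Gam_scale2: "Gam w m f (\<lambda>z. c * f z) y = c * Gam w m f f y"
  unfolding Gam_eq by (simp add: sum_distrib_left algebra_simps)

lemma eig_En: assumes G: "weighted_graph w m" and E: "\<forall>y. - Lap w m \<phi> y = \<mu> * \<phi> y"
  shows "\<mu> * (\<Sum>y\<in>UNIV. m y * (\<phi> y)^2) = En w \<phi> / 2"
proof -
  have "(\<Sum>y\<in>UNIV. m y * Lap w m \<phi> y * \<phi> y) = - (\<mu> * (\<Sum>y\<in>UNIV. m y * (\<phi> y)^2))"
    unfolding sum_distrib_left sum_negf[symmetric]
  proof (intro sum.cong refl)
    fix y have "Lap w m \<phi> y = - \<mu> * \<phi> y" using E by (metis minus_minus mult_minus_left)
    then show "m y * Lap w m \<phi> y * \<phi> y = - (\<mu> * (m y * (\<phi> y)\<^sup>2))" by (simp add: power2_eq_square)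
  qed
  then show ?thesis using ibp_self[OF G, of \<phi>] by linarith
qed

lemma msq_pos: fixes \<phi> :: "'v::finite \<Rightarrow> real" assumes G: "weighted_graph w m" and "\<phi> a \<noteq> 0"
  shows "(\<Sum>y\<in>UNIV. m y * (\<phi> y)^2) > 0"
proof -
  have "(\<Sum>y\<in>UNIV. m y * (\<phi> y)^2) \<ge> (\<Sum>y\<in>{a}. m y * (\<phi> y)^2)"
    by (rule sum_mono2) (auto intro!: mult_nonneg_nonneg less_imp_le[OF wg(4)[OF G]])
  moreover have "m a * (\<phi> a)^2 > 0" using assms wg(4)[OF G] by simp
  ultimately show ?thesis by simp
qed

lemma eig_nonneg: assumes G: "weighted_graph w m" and E: "\<forall>y. - Lap w m \<phi> y = \<mu> * \<phi> y"
  and "\<phi> a \<noteq> 0" shows "\<mu> \<ge> 0"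
proof -
  have "\<mu> * (\<Sum>y\<in>UNIV. m y * (\<phi> y)^2) \<ge> 0" using eig_En[OF G E] En_nonneg[OF G, of \<phi>] by simp
  then show ?thesis using msq_pos[where \<phi>=\<phi> and a=a, OF G assms(3)] by (simp add: zero_le_mult_iff)
qed

lemma eig_zero_const: assumes G: "weighted_graph w m" and C: "connected_graph w"
  and E: "\<forall>y. - Lap w m \<phi> y = 0 * \<phi> y" shows "\<phi> a = \<phi> b"
  using eig_En[OF G E] En_zero_const[OF G C] by simp

lemma Lap_eig_fun: assumes E: "\<forall>y. - Lap w m \<phi> y = \<mu> * \<phi> y"
  shows "Lap w m \<phi> = (\<lambda>z. (- \<mu>) * \<phi> z)"
  using E by (auto simp: fun_eq_iff) (metis minus_minus mult_minus_left)

lemma Gam2_eig: assumes E: "\<forall>y. - Lap w m \<phi> y = \<mu> * \<phi> y"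
  shows "Gam2 w m \<phi> \<phi> y = Lap w m (Gam w m \<phi> \<phi>) y / 2 + \<mu> * Gam w m \<phi> \<phi> y"
  unfolding Gam2_def Lap_eig_fun[OF E] Gam_scale2 by simp

lemma lichnerowicz: assumes G: "weighted_graph w m" and CD: "CD_inf w m K"
  and E: "\<forall>y. - Lap w m \<phi> y = \<mu> * \<phi> y" and "\<phi> a \<noteq> 0" and "\<mu> \<noteq> 0"
  shows "\<mu> \<ge> K"
proof -
  let ?g = "Gam w m \<phi> \<phi>"
  have "\<And>y. m y * (K * ?g y) \<le> m y * (Lap w m ?g y / 2 + \<mu> * ?g y)"
    using CD Gam2_eig[OF E] wg(4)[OF G] unfolding CD_inf_def by (metis less_imp_le mult_left_mono)
  then have "(\<Sum>y\<in>UNIV. m y * (K * ?g y)) \<le> (\<Sum>y\<in>UNIV. m y * (Lap w m ?g y / 2 + \<mu> * ?g y))"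
    by (rule sum_mono)
  also have "\<dots> = (\<Sum>y\<in>UNIV. m y * Lap w m ?g y) / 2 + \<mu> * (\<Sum>y\<in>UNIV. m y * ?g y)"
    by (simp add: sum.distrib sum_distrib_left sum_divide_distrib algebra_simps)
  finally have "K * (\<Sum>y\<in>UNIV. m y * ?g y) \<le> \<mu> * (\<Sum>y\<in>UNIV. m y * ?g y)"
    using sum_Lap[OF G] by (simp add: sum_distrib_left algebra_simps)
  moreover have "\<mu> \<ge> 0" using eig_nonneg[OF G E assms(4)] .
  then have "\<mu> > 0" using assms(5) by simp
  then have "\<mu> * (\<Sum>y\<in>UNIV. m y * (\<phi> y)^2) > 0"
    using msq_pos[where \<phi>=\<phi> and a=a, OF G assms(4)] by simp
  then have "(\<Sum>y\<in>UNIV. m y * ?g y) > 0"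
    using sum_Gam[OF G, of \<phi>] eig_En[OF G E] msq_pos[where \<phi>=\<phi> and a=a, OF G assms(4)] by simp
  ultimately show ?thesis by simp
qed

lemma eigK_ball_zero: assumes G: "weighted_graph w m" and C: "connected_graph w" and CD: "CD_inf w m K"
  and E: "\<forall>y. - Lap w m \<phi> y = K * \<phi> y" and Z: "\<forall>y\<in>ball1 w x. \<phi> y = 0"
  shows "\<phi> a = 0"
proof -
  let ?g = "Gam w m \<phi> \<phi>"
  have nn: "m y * Lap w m ?g y \<ge> 0" for y
  proof -
    have "K * ?g y \<le> Gam2 w m \<phi> \<phi> y" using CD unfolding CD_inf_def by blast
    then have "Lap w m ?g y \<ge> 0" using Gam2_eig[OF E, of y] by linarith
    then show ?thesis using wg(4)[OF G, of y] by simp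
  qed
  have "\<forall>y\<in>UNIV. m y * Lap w m ?g y = 0"
    using sum_Lap[OF G, of ?g] nn by (subst sum_nonneg_eq_0_iff[symmetric]) auto
  then have "\<And>y. Lap w m ?g y = 0" using wg(4)[OF G] by (metis UNIV_I mult_eq_0_iff less_irrefl)
  then have "En w ?g = 0" using ibp_self[OF G, of ?g] by simp
  then have gc: "\<And>y. ?g y = ?g x" using En_zero_const[OF G C] by blast
  have "?g x = 0" unfolding Gam_eq
  proof -
    have "\<And>z. w x z * (\<phi> z - \<phi> x) * (\<phi> z - \<phi> x) = 0"
    proof -
      fix z show "w x z * (\<phi> z - \<phi> x) * (\<phi> z - \<phi> x) = 0"
      proof (cases "w x z > 0")
        case True
        then have "adj w z x" unfolding adj_def using wg(2)[OF G] by metis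
        then have "z \<in> ball1 w x" "x \<in> ball1 w x" unfolding ball1_def by auto
        then show ?thesis using Z by simp
      next
        case False then have "w x z = 0" using wg(1)[OF G, of x z] by simp
        then show ?thesis by simp
      qed
    qed
    then have "(\<Sum>z\<in>UNIV. w x z * (\<phi> z - \<phi> x) * (\<phi> z - \<phi> x)) = 0" by (intro sum.neutral) blast
    then show "(\<Sum>z\<in>UNIV. w x z * (\<phi> z - \<phi> x) * (\<phi> z - \<phi> x)) / (2 * m x) = 0" by simp
  qed
  then have "\<And>y. ?g y = 0" using gc by simp
  then have "En w \<phi> = 0" using sum_Gam[OF G, of \<phi>] by simp
  then have "\<phi> a = \<phi> x" using En_zero_const[OF G C] by blast
  moreover have "\<phi> x = 0" using Z unfolding ball1_def by auto
  ultimately show ?thesis by simp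
qed

lemma quad0: fixes a c :: real assumes "\<forall>t. 2*t*a + t^2*c \<le> 0" shows "a = 0"
proof (rule ccontr)
  assume "a \<noteq> 0"
  define s where "s = 1 / (1 + \<bar>c\<bar>)"
  have s: "s > 0" "s * \<bar>c\<bar> < 1" unfolding s_def by (auto simp: field_simps)
  have "s * (- c) \<le> s * \<bar>c\<bar>" using s(1) by (intro mult_left_mono) auto
  then have "2 + s * c > 1" using s by linarith
  moreover have "a^2 * s > 0" using \<open>a \<noteq> 0\<close> s by simp
  ultimately have "(a^2 * s) * (2 + s*c) > 0" by (simp add: zero_less_mult_iff)
  moreover have "2 * (a * s) * a + (a * s)^2 * c = (a^2 * s) * (2 + s * c)" by (simp add: power2_eq_square algebra_simps)
  ultimately show False using assms[rule_format, of "a * s"] by linarith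
qed

definition Lv :: "('v::finite \<Rightarrow> 'v \<Rightarrow> real) \<Rightarrow> ('v \<Rightarrow> real) \<Rightarrow> real^'v \<Rightarrow> real^'v" where
  "Lv w m v = (\<chi> y. - Lap w m (vec_nth v) y)"

definition Dm :: "('v::finite \<Rightarrow> real) \<Rightarrow> real^'v \<Rightarrow> real^'v" where
  "Dm m v = (\<chi> y. m y * v $ y)"

lemma Lap_add: "Lap w m (\<lambda>y. f y + g y) x = Lap w m f x + Lap w m g x"
  using Lap_lin[of w m 1 f 1 g x] by simp

lemma Lap_scale: "Lap w m (\<lambda>y. c * f y) x = c * Lap w m f x"
  using Lap_lin[of w m c f 0 f x] by simp

lemma linear_Lv: "linear (Lv w m)"
proof (rule linearI)
  fix u v :: "real^'a" and r :: real
  have "vec_nth (u + v) = (\<lambda>y. u $ y + v $ y)" by auto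
  then show "Lv w m (u + v) = Lv w m u + Lv w m v" unfolding Lv_def
    by (simp add: Lap_add vec_eq_iff)
  have "vec_nth (r *\<^sub>R u) = (\<lambda>y. r * u $ y)" by auto
  then show "Lv w m (r *\<^sub>R u) = r *\<^sub>R Lv w m u" unfolding Lv_def
    by (simp add: Lap_scale vec_eq_iff)
qed

lemma linear_Dm: "linear (Dm m)"
  by (rule linearI) (auto simp: Dm_def vec_eq_iff algebra_simps)

lemma inner_Dm: "u \<bullet> Dm m v = (\<Sum>y\<in>UNIV. m y * u $ y * v $ y)"
  unfolding inner_vec_def Dm_def by (simp add: algebra_simps)

lemma inner_Dm_sym: "u \<bullet> Dm m v = v \<bullet> Dm m u"
  unfolding inner_Dm by (simp add: algebra_simps)

lemma inner_Dm_pos: assumes G: "weighted_graph w m" and "v \<noteq> 0" shows "v \<bullet> Dm m v > 0"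
proof -
  obtain a where "v $ a \<noteq> 0" using assms(2) by (metis vec_eq_iff zero_index)
  then show ?thesis unfolding inner_Dm using msq_pos[where \<phi>="vec_nth v" and a=a, OF G]
    by (simp add: power2_eq_square mult.assoc)
qed

lemma inner_Dm_nonneg: assumes G: "weighted_graph w m" shows "v \<bullet> Dm m v \<ge> 0"
  using inner_Dm_pos[OF G, of v] by (cases "v = 0") (auto simp: Dm_def)

lemma Lv_selfadj: assumes G: "weighted_graph w m"
  shows "Lv w m u \<bullet> Dm m v = Lv w m v \<bullet> Dm m u"
proof -
  have "Lv w m u \<bullet> Dm m v = - (\<Sum>y\<in>UNIV. m y * Lap w m (vec_nth u) y * v $ y)"
    unfolding inner_Dm Lv_def by (simp add: sum_negf[symmetric] algebra_simps)
  also have "\<dots> = (\<Sum>y\<in>UNIV. \<Sum>z\<in>UNIV. w y z * (u $ z - u $ y) * (v $ z - v $ y)) / 2"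
    using ibp[OF G, of "vec_nth u" "vec_nth v"] by simp
  also have "\<dots> = - (\<Sum>y\<in>UNIV. m y * Lap w m (vec_nth v) y * u $ y)"
    using ibp[OF G, of "vec_nth v" "vec_nth u"] by (simp add: algebra_simps)
  also have "\<dots> = Lv w m v \<bullet> Dm m u"
    unfolding inner_Dm Lv_def by (simp add: sum_negf[symmetric] algebra_simps)
  finally show ?thesis .
qed

lemma exists_eigvec: assumes G: "weighted_graph w m" and S: "subspace S"
  and inv: "\<forall>v\<in>S. Lv w m v \<in> S" and u0: "u0 \<in> S" "u0 \<noteq> 0"
  shows "\<exists>v\<in>S. v \<noteq> 0 \<and> (\<exists>c. Lv w m v = c *\<^sub>R v)"
proof -
  define R where "R v = (Lv w m v \<bullet> Dm m v) / (v \<bullet> Dm m v)" for v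
  define T where "T = S \<inter> sphere 0 1"
  have cT: "compact T" unfolding T_def using closed_subspace[OF S] compact_sphere
    by (simp add: closed_Int_compact)
  have u1: "(1 / norm u0) *\<^sub>R u0 \<in> T" unfolding T_def using u0 S
    by (simp add: subspace_scale)
  then have neT: "T \<noteq> {}" by auto
  have T0: "\<And>v. v \<in> T \<Longrightarrow> v \<noteq> 0" unfolding T_def by auto
  have cLv: "continuous_on T (Lv w m)" using linear_Lv linear_conv_bounded_linear linear_continuous_on by blast
  have cDm: "continuous_on T (Dm m)" using linear_Dm linear_conv_bounded_linear linear_continuous_on by blast
  have "continuous_on T R" unfolding R_def
    by (intro continuous_on_divide continuous_on_inner cLv cDm continuous_on_id)
       (use T0 inner_Dm_pos[OF G] in fastforce)
  then obtain v0 where v0: "v0 \<in> T" "\<And>y. y \<in> T \<Longrightarrow> R y \<le> R v0"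
    using continuous_attains_sup[OF cT neT] by blast
  define lam where "lam = R v0"
  have v0S: "v0 \<in> S" and v0n: "v0 \<noteq> 0" using v0(1) T0 unfolding T_def by auto
  have hom: "Lv w m u \<bullet> Dm m u \<le> lam * (u \<bullet> Dm m u)" if uS: "u \<in> S" for u
  proof (cases "u = 0")
    case True
    have "Dm m 0 = 0" by (simp add: Dm_def vec_eq_iff)
    then show ?thesis using True by simp
  next
    case False
    define c where "c = 1 / norm u"
    have "c *\<^sub>R u \<in> T" unfolding T_def c_def using uS S False by (simp add: subspace_scale)
    then have r1: "R (c *\<^sub>R u) \<le> lam" using v0(2) unfolding lam_def by blast
    have "c \<noteq> 0" unfolding c_def using False by simp
    moreover have "Lv w m (c *\<^sub>R u) = c *\<^sub>R Lv w m u" by (rule linear_cmul[OF linear_Lv])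
    moreover have "Dm m (c *\<^sub>R u) = c *\<^sub>R Dm m u" by (rule linear_cmul[OF linear_Dm])
    ultimately have "R (c *\<^sub>R u) = R u" unfolding R_def by (simp add: power2_eq_square)
    then have "R u \<le> lam" using r1 by simp
    then show ?thesis unfolding R_def using inner_Dm_pos[OF G False] by (simp add: divide_le_eq)
  qed
  have b0: "v0 \<bullet> Dm m v0 > 0" using inner_Dm_pos[OF G v0n] .
  have a0: "Lv w m v0 \<bullet> Dm m v0 = lam * (v0 \<bullet> Dm m v0)" unfolding lam_def R_def using b0 by simp
  have key: "Lv w m v0 \<bullet> Dm m u - lam * (v0 \<bullet> Dm m u) = 0" if uS: "u \<in> S" for u
  proof -
    let ?al = "Lv w m v0 \<bullet> Dm m u - lam * (v0 \<bullet> Dm m u)"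
    let ?c = "Lv w m u \<bullet> Dm m u - lam * (u \<bullet> Dm m u)"
    have "2*t*?al + t^2*?c \<le> 0" for t
    proof -
      have "v0 + t *\<^sub>R u \<in> S" using S v0S uS by (simp add: subspace_add subspace_scale)
      then have h: "Lv w m (v0 + t *\<^sub>R u) \<bullet> Dm m (v0 + t *\<^sub>R u) \<le> lam * ((v0 + t *\<^sub>R u) \<bullet> Dm m (v0 + t *\<^sub>R u))"
        by (rule hom)
      have l1: "Lv w m (v0 + t *\<^sub>R u) = Lv w m v0 + Lv w m (t *\<^sub>R u)" by (rule linear_add[OF linear_Lv])
      have l2: "Lv w m (t *\<^sub>R u) = t *\<^sub>R Lv w m u" by (rule linear_cmul[OF linear_Lv])
      have d1: "Dm m (v0 + t *\<^sub>R u) = Dm m v0 + Dm m (t *\<^sub>R u)" by (rule linear_add[OF linear_Dm])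
      have d2: "Dm m (t *\<^sub>R u) = t *\<^sub>R Dm m u" by (rule linear_cmul[OF linear_Dm])
      have e1: "Lv w m (v0 + t *\<^sub>R u) \<bullet> Dm m (v0 + t *\<^sub>R u) =
         Lv w m v0 \<bullet> Dm m v0 + 2 * t * (Lv w m v0 \<bullet> Dm m u) + t^2 * (Lv w m u \<bullet> Dm m u)"
        using l1 l2 d1 d2 Lv_selfadj[OF G, of u v0]
        by (simp add: inner_add_left inner_add_right power2_eq_square algebra_simps)
      have e2: "(v0 + t *\<^sub>R u) \<bullet> Dm m (v0 + t *\<^sub>R u) =
         v0 \<bullet> Dm m v0 + 2 * t * (v0 \<bullet> Dm m u) + t^2 * (u \<bullet> Dm m u)"
        using d1 d2 inner_Dm_sym[of u m v0]
        by (simp add: inner_add_left inner_add_right power2_eq_square algebra_simps)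
      show ?thesis using h a0 unfolding e1 e2 by (simp add: algebra_simps)
    qed
    then show ?thesis using quad0 by blast
  qed
  define u where "u = Lv w m v0 - lam *\<^sub>R v0"
  have uS: "u \<in> S" unfolding u_def using S inv v0S by (simp add: subspace_diff subspace_scale)
  have "u \<bullet> Dm m u = 0" using key[OF uS] unfolding u_def by (simp add: inner_diff_left)
  then have "u = 0" using inner_Dm_pos[OF G, of u] by fastforce
  then show ?thesis using v0S v0n unfolding u_def by auto
qed

lemma orth_indep: assumes G: "weighted_graph w m" and nz: "\<forall>b\<in>B. b \<noteq> 0"
  and orth: "\<forall>a\<in>B. \<forall>b\<in>B. a \<noteq> b \<longrightarrow> a \<bullet> Dm m b = 0"
  shows "independent B"
proof
  assume "dependent B"
  then obtain a where aB: "a \<in> B" and sp: "a \<in> span (B - {a})" unfolding dependent_def by blast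
  have "subspace {x. x \<bullet> Dm m a = 0}"
    unfolding subspace_def by (auto simp: inner_add_left)
  moreover have "B - {a} \<subseteq> {x. x \<bullet> Dm m a = 0}" using orth aB by auto
  ultimately have "span (B - {a}) \<subseteq> {x. x \<bullet> Dm m a = 0}" by (rule span_minimal[rotated])
  then have "a \<bullet> Dm m a = 0" using sp by auto
  then show False using inner_Dm_pos[OF G] nz aB by fastforce
qed

lemma eig_orth: assumes G: "weighted_graph w m" and "Lv w m a = \<mu> *\<^sub>R a" "Lv w m b = \<nu> *\<^sub>R b" "\<mu> \<noteq> \<nu>"
  shows "a \<bullet> Dm m b = 0"
proof -
  have "\<mu> * (a \<bullet> Dm m b) = \<nu> * (a \<bullet> Dm m b)"
    using Lv_selfadj[OF G, of a b] assms(2,3) inner_Dm_sym[of a m b] by simp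
  then show ?thesis using assms(4) by simp
qed

lemma eig_family: fixes w :: "'v::finite \<Rightarrow> 'v \<Rightarrow> real"
  assumes G: "weighted_graph w m" shows "k \<le> CARD('v) \<Longrightarrow> \<exists>B. finite B \<and> card B = k \<and> (\<forall>b\<in>B. b \<noteq> 0 \<and> (\<exists>c. Lv w m b = c *\<^sub>R b))
     \<and> (\<forall>a\<in>B. \<forall>b\<in>B. a \<noteq> b \<longrightarrow> a \<bullet> Dm m b = 0)"
proof (induction k)
  case 0 then show ?case by (intro exI[of _ "{}"]) auto
next
  case (Suc k)
  then obtain B where B: "finite B" "card B = k" "\<forall>b\<in>B. b \<noteq> 0 \<and> (\<exists>c. Lv w m b = c *\<^sub>R b)"
     "\<forall>a\<in>B. \<forall>b\<in>B. a \<noteq> b \<longrightarrow> a \<bullet> Dm m b = 0" by auto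
  define S where "S = {f. \<forall>b\<in>B. f \<bullet> Dm m b = 0}"
  have sS: "subspace S" unfolding S_def subspace_def by (auto simp: inner_add_left)
  have inv: "\<forall>v\<in>S. Lv w m v \<in> S"
  proof
    fix v assume "v \<in> S"
    show "Lv w m v \<in> S" unfolding S_def mem_Collect_eq
    proof (intro ballI)
      fix b assume bB: "b \<in> B"
      then obtain c where "Lv w m b = c *\<^sub>R b" using B(3) by auto
      then show "Lv w m v \<bullet> Dm m b = 0" using Lv_selfadj[OF G, of v b] \<open>v \<in> S\<close> bB inner_Dm_sym[of b m v]
        unfolding S_def by simp
    qed
  qed
  have "span (Dm m ` B) \<noteq> UNIV"
  proof
    assume "span (Dm m ` B) = UNIV"
    then have "dim (UNIV :: (real^'v) set) \<le> card (Dm m ` B)" using B(1) by (metis dim_le_card finite_imageI order_refl)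
    also have "\<dots> \<le> k" using B(1,2) card_image_le by blast
    finally show False using Suc.prems by (simp add: dim_UNIV)
  qed
  then obtain a where a: "a \<noteq> 0" "\<forall>x\<in>span (Dm m ` B). a \<bullet> x = 0" using span_not_UNIV_orthogonal by blast
  have "a \<in> S" unfolding S_def using a(2) by (auto intro: span_base)
  then obtain v where v: "v \<in> S" "v \<noteq> 0" "\<exists>c. Lv w m v = c *\<^sub>R v"
    using exists_eigvec[OF G sS inv _ a(1)] by blast
  have vB: "v \<notin> B"
  proof
    assume "v \<in> B" then have "v \<bullet> Dm m v = 0" using v(1) unfolding S_def by blast
    then show False using inner_Dm_pos[OF G v(2)] by simp
  qed
  show ?case
  proof (intro exI[of _ "insert v B"] conjI)
    show "finite (insert v B)" using B(1) by simp
    show "card (insert v B) = Suc k" using B(1,2) vB by simp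
    show "\<forall>b\<in>insert v B. b \<noteq> 0 \<and> (\<exists>c. Lv w m b = c *\<^sub>R b)" using B(3) v by auto
    show "\<forall>a\<in>insert v B. \<forall>b\<in>insert v B. a \<noteq> b \<longrightarrow> a \<bullet> Dm m b = 0"
    proof (intro ballI impI)
      fix a b assume ab: "a \<in> insert v B" "b \<in> insert v B" "a \<noteq> b"
      have vS: "\<forall>b\<in>B. v \<bullet> Dm m b = 0" using v(1) unfolding S_def by blast
      show "a \<bullet> Dm m b = 0"
      proof (cases "a = v")
        case True then show ?thesis using ab vS by auto
      next
        case False
        then have aB: "a \<in> B" using ab by auto
        show ?thesis
        proof (cases "b = v")
          case True then show ?thesis using vS aB inner_Dm_sym[of a m v] by simp
        next
          case False then show ?thesis using aB ab B(4) by auto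
        qed
      qed
    qed
  qed
qed

lemma eigspace_eq: "eigspace w m \<mu> = {v. Lv w m v = \<mu> *\<^sub>R v}"
  unfolding eigspace_def Lv_def by (auto simp: vec_eq_iff)

lemma is_eig_vec: "is_eigenvalue w m \<mu> \<longleftrightarrow> (\<exists>v. v \<noteq> 0 \<and> Lv w m v = \<mu> *\<^sub>R v)"
proof
  assume "is_eigenvalue w m \<mu>"
  then obtain f where f: "f \<noteq> (\<lambda>_. 0)" "\<forall>x. - Lap w m f x = \<mu> * f x" unfolding is_eigenvalue_def by blast
  have nth: "vec_nth (vec_lambda f) = f" by (simp add: fun_eq_iff)
  have "vec_lambda f \<noteq> 0" using f(1) by (auto simp: vec_eq_iff fun_eq_iff)
  moreover have "Lv w m (vec_lambda f) = \<mu> *\<^sub>R vec_lambda f" unfolding Lv_def nth using f(2) by (simp add: vec_eq_iff)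
  ultimately show "\<exists>v. v \<noteq> 0 \<and> Lv w m v = \<mu> *\<^sub>R v" by blast
next
  assume "\<exists>v. v \<noteq> 0 \<and> Lv w m v = \<mu> *\<^sub>R v"
  then obtain v where v: "v \<noteq> 0" "Lv w m v = \<mu> *\<^sub>R v" by blast
  have "vec_nth v \<noteq> (\<lambda>_. 0)" using v(1) by (auto simp: vec_eq_iff fun_eq_iff)
  moreover have "\<forall>x. - Lap w m (vec_nth v) x = \<mu> * v $ x" using v(2) unfolding Lv_def by (simp add: vec_eq_iff)
  ultimately show "is_eigenvalue w m \<mu>" unfolding is_eigenvalue_def by blast
qed

lemma subspace_eigspace: "subspace (eigspace w m \<mu>)"
  unfolding subspace_def eigspace_eq
proof (intro conjI ballI allI)
  show "0 \<in> {v. Lv w m v = \<mu> *\<^sub>R v}" using linear_0[OF linear_Lv, of w m] by simp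
  fix x y assume "x \<in> {v. Lv w m v = \<mu> *\<^sub>R v}" "y \<in> {v. Lv w m v = \<mu> *\<^sub>R v}"
  moreover have "Lv w m (x + y) = Lv w m x + Lv w m y" by (rule linear_add[OF linear_Lv])
  ultimately show "x + y \<in> {v. Lv w m v = \<mu> *\<^sub>R v}" by (simp add: scaleR_right_distrib)
next
  fix c x assume "x \<in> {v. Lv w m v = \<mu> *\<^sub>R v}"
  moreover have "Lv w m (c *\<^sub>R x) = c *\<^sub>R Lv w m x" by (rule linear_cmul[OF linear_Lv])
  ultimately show "c *\<^sub>R x \<in> {v. Lv w m v = \<mu> *\<^sub>R v}" by simp
qed

lemma Ev_finite: fixes w :: "'v::finite \<Rightarrow> 'v \<Rightarrow> real"
  assumes G: "weighted_graph w m" shows "finite {\<mu>. is_eigenvalue w m \<mu>}"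
proof -
  have "card F \<le> CARD('v)" if F: "F \<subseteq> {\<mu>. is_eigenvalue w m \<mu>}" "finite F" for F
  proof -
    define e where "e \<mu> = (SOME v. v \<noteq> 0 \<and> Lv w m v = \<mu> *\<^sub>R v)" for \<mu>
    have e: "e \<mu> \<noteq> 0 \<and> Lv w m (e \<mu>) = \<mu> *\<^sub>R e \<mu>" if "\<mu> \<in> F" for \<mu>
      unfolding e_def by (rule someI_ex) (use F that is_eig_vec in blast)
    have inj: "inj_on e F"
    proof (rule inj_onI)
      fix a b assume ab: "a \<in> F" "b \<in> F" "e a = e b"
      then have "a *\<^sub>R e a = b *\<^sub>R e a" using e[of a] e[of b] by metis
      then show "a = b" using e[OF ab(1)] by simp
    qed
    have "independent (e ` F)"
    proof (rule orth_indep[OF G])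
      show "\<forall>b\<in>e ` F. b \<noteq> 0" using e by auto
      show "\<forall>a\<in>e ` F. \<forall>b\<in>e ` F. a \<noteq> b \<longrightarrow> a \<bullet> Dm m b = 0"
        using e eig_orth[OF G] by fastforce
    qed
    then have "card (e ` F) \<le> dim (UNIV :: (real^'v) set)" by (rule independent_card_le_dim[rotated]) simp
    then show ?thesis using card_image[OF inj] by (simp add: dim_UNIV)
  qed
  then show ?thesis using finite_if_finite_subsets_card_bdd by blast
qed

lemma size_ge: fixes w :: "'v::finite \<Rightarrow> 'v \<Rightarrow> real"
  assumes G: "weighted_graph w m" shows "CARD('v) \<le> size (eig_mset w m)"
proof -
  let ?Ev = "{\<mu>. is_eigenvalue w m \<mu>}"
  obtain B where B: "finite B" "card B = CARD('v)" "\<forall>b\<in>B. b \<noteq> 0 \<and> (\<exists>c. Lv w m b = c *\<^sub>R b)"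
     "\<forall>a\<in>B. \<forall>b\<in>B. a \<noteq> b \<longrightarrow> a \<bullet> Dm m b = 0" using eig_family[OF G, of "CARD('v)"] by auto
  define Bm where "Bm \<mu> = {b\<in>B. Lv w m b = \<mu> *\<^sub>R b}" for \<mu>
  have "B \<subseteq> (\<Union>\<mu>\<in>?Ev. Bm \<mu>)"
  proof
    fix b assume "b \<in> B"
    then obtain c where "b \<noteq> 0" "Lv w m b = c *\<^sub>R b" using B(3) by auto
    then show "b \<in> (\<Union>\<mu>\<in>?Ev. Bm \<mu>)" unfolding Bm_def using \<open>b \<in> B\<close> is_eig_vec by blast
  qed
  then have "card B \<le> card (\<Union>\<mu>\<in>?Ev. Bm \<mu>)"
    by (rule card_mono[rotated]) (use Ev_finite[OF G] B(1) in \<open>auto simp: Bm_def\<close>)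
  also have "\<dots> \<le> (\<Sum>\<mu>\<in>?Ev. card (Bm \<mu>))" by (rule card_UN_le[OF Ev_finite[OF G]])
  also have "\<dots> \<le> (\<Sum>\<mu>\<in>?Ev. dim (eigspace w m \<mu>))"
  proof (rule sum_mono)
    fix \<mu>
    have "independent (Bm \<mu>)" by (rule orth_indep[OF G]) (use B(3,4) in \<open>auto simp: Bm_def\<close>)
    moreover have "Bm \<mu> \<subseteq> eigspace w m \<mu>" unfolding Bm_def eigspace_eq by auto
    ultimately show "card (Bm \<mu>) \<le> dim (eigspace w m \<mu>)" using independent_card_le_dim by blast
  qed
  also have "\<dots> = size (eig_mset w m)" unfolding eig_mset_def by (simp add: size_multiset_sum)
  finally show ?thesis using B(2) by simp
qed

lemma count_eig: assumes G: "weighted_graph w m"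
  shows "count (eig_mset w m) \<mu> = (if is_eigenvalue w m \<mu> then dim (eigspace w m \<mu>) else 0)"
proof -
  have "count (eig_mset w m) \<mu> = (\<Sum>\<nu>\<in>{\<mu>. is_eigenvalue w m \<mu>}. if \<mu> = \<nu> then dim (eigspace w m \<nu>) else 0)"
    unfolding eig_mset_def count_sum by simp
  also have "\<dots> = (if is_eigenvalue w m \<mu> then dim (eigspace w m \<mu>) else 0)"
    using sum.delta'[OF Ev_finite[OF G], of \<mu> "\<lambda>\<nu>. dim (eigspace w m \<nu>)"] by simp
  finally show ?thesis .
qed

lemma dim_E0: assumes G: "weighted_graph w m" and C: "connected_graph w"
  shows "dim (eigspace w m 0) \<le> 1"
proof -
  let ?one = "(\<chi> y. 1) :: real^'a"
  have "eigspace w m 0 \<subseteq> span {?one}"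
  proof
    fix v assume "v \<in> eigspace w m 0"
    then have "\<forall>y. - Lap w m (vec_nth v) y = 0 * v $ y" unfolding eigspace_def by simp
    then have c: "\<And>a b. v $ a = v $ b" using eig_zero_const[OF G C] by blast
    obtain a :: 'a where True by blast
    have "v = (v $ a) *\<^sub>R ?one" using c by (auto simp: vec_eq_iff)
    then show "v \<in> span {?one}" by (metis span_base span_scale singletonI)
  qed
  then show ?thesis using dim_le_card[of "eigspace w m 0" "{?one}"] by simp
qed

lemma eig_dichot: assumes G: "weighted_graph w m" and CD: "CD_inf w m K" and E: "is_eigenvalue w m \<mu>"
  shows "\<mu> = 0 \<or> \<mu> \<ge> K"
proof -
  obtain f where f: "f \<noteq> (\<lambda>_. 0)" "\<forall>x. - Lap w m f x = \<mu> * f x" using E unfolding is_eigenvalue_def by blast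
  then obtain a where "f a \<noteq> 0" by auto
  then show ?thesis using lichnerowicz[OF G CD f(2)] by blast
qed

lemma deg_lt: fixes w :: "'v::finite \<Rightarrow> 'v \<Rightarrow> real" assumes G: "weighted_graph w m"
  shows "deg w x < CARD('v)"
proof -
  have "{y. adj w y x} \<subseteq> UNIV - {x}" using wg(3)[OF G, of x] unfolding adj_def by auto
  then have "deg w x \<le> card (UNIV - {x} :: 'v set)" unfolding deg_def by (rule card_mono[rotated]) simp
  also have "\<dots> = CARD('v) - 1" by (simp add: card_Diff_singleton)
  moreover have "CARD('v) > 0" by (simp add: card_gt_0_iff)
  ultimately show ?thesis by linarith
qed

lemma mult_K: fixes w :: "'v::finite \<Rightarrow> 'v \<Rightarrow> real"
  assumes G: "weighted_graph w m" and C: "connected_graph w" and K: "K > 0" and CD: "CD_inf w m K"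
  and ev: "eigval w m (deg w x) = K"
  shows "deg w x \<le> dim (eigspace w m K)"
proof -
  define M where "M = eig_mset w m"
  define s where "s = sorted_list_of_multiset M"
  define d where "d = deg w x"
  have ms: "mset s = M" unfolding s_def by simp
  have srt: "sorted s" unfolding s_def by simp
  have "length s = size M" using ms size_mset by metis
  then have len: "d < length s" using size_ge[OF G] deg_lt[OF G, of x] unfolding M_def d_def by linarith
  have sK: "s ! d = K" using ev unfolding eigval_def s_def M_def d_def .
  have le: "\<forall>y\<in>set (take (Suc d) s). y \<le> K"
  proof
    fix y assume "y \<in> set (take (Suc d) s)"
    then obtain i where i: "i < length (take (Suc d) s)" "y = take (Suc d) s ! i" by (metis in_set_conv_nth)
    then have "i \<le> d" "y = s ! i" by auto
    then show "y \<le> K" using sorted_nth_mono[OF srt _ len] sK by simp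
  qed
  have "length (filter (\<lambda>y. y \<le> K) s) = length (filter (\<lambda>y. y \<le> K) (take (Suc d) s)) + length (filter (\<lambda>y. y \<le> K) (drop (Suc d) s))"
    by (metis append_take_drop_id filter_append length_append)
  moreover have "filter (\<lambda>y. y \<le> K) (take (Suc d) s) = take (Suc d) s" using le by (rule filter_True)
  moreover have "length (take (Suc d) s) = Suc d" using len by simp
  ultimately have "Suc d \<le> length (filter (\<lambda>y. y \<le> K) s)" by simp
  also have "\<dots> = size (filter_mset (\<lambda>y. y \<le> K) M)" by (metis ms mset_filter size_mset)
  also have "\<dots> \<le> size (replicate_mset (count M K) K + replicate_mset (count M 0) 0)"
  proof (rule size_mset_mono, rule mset_subset_eqI)
    fix y
    show "count (filter_mset (\<lambda>y. y \<le> K) M) y \<le> count (replicate_mset (count M K) K + replicate_mset (count M 0) 0) y"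
    proof (cases "y \<le> K \<and> count M y > 0")
      case True
      then have "is_eigenvalue w m y" using count_eig[OF G, of y] unfolding M_def by (metis less_irrefl)
      then have "y = 0 \<or> y = K" using eig_dichot[OF G CD] True by force
      then show ?thesis using K by auto
    next
      case False then show ?thesis by (auto simp: count_eq_zero_iff)
    qed
  qed
  also have "\<dots> = count M K + count M 0" by simp
  finally have "Suc d \<le> count M K + count M 0" .
  moreover have "count M 0 \<le> 1" using count_eig[OF G, of 0] dim_E0[OF G C] unfolding M_def by simp
  moreover have "count M K \<le> dim (eigspace w m K)" using count_eig[OF G, of K] unfolding M_def by simp
  ultimately show ?thesis unfolding d_def by linarith
qed

lemma Lap_local: assumes G: "weighted_graph w m" and eq: "\<forall>y\<in>ball1 w x. f y = g y"
  shows "Lap w m f x = Lap w m g x"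
proof -
  have "w x y * (f y - f x) = w x y * (g y - g x)" for y
  proof (cases "w x y > 0")
    case True
    then have "adj w y x" unfolding adj_def using wg(2)[OF G] by metis
    then have "y \<in> ball1 w x" "x \<in> ball1 w x" unfolding ball1_def by auto
    then show ?thesis using eq by simp
  next
    case False then have "w x y = 0" using wg(1)[OF G, of x y] by simp
    then show ?thesis by simp
  qed
  then have "(\<Sum>y\<in>UNIV. w x y * (f y - f x)) = (\<Sum>y\<in>UNIV. w x y * (g y - g x))"
    by (intro sum.cong refl)
  then show ?thesis unfolding Lap_def by simp
qed

lemma card_ball1: assumes G: "weighted_graph w m" shows "card (ball1 w x) = Suc (deg w x)"
proof -
  have "x \<notin> {y. adj w y x}" using wg(3)[OF G, of x] unfolding adj_def by simp
  then show ?thesis unfolding ball1_def deg_def by simp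
qed

theorem lemma3:
  fixes w :: "'v::finite \<Rightarrow> 'v \<Rightarrow> real" and m :: "'v \<Rightarrow> real"
    and K :: real and x :: 'v and f :: "'v \<Rightarrow> real"
  assumes "weighted_graph w m"
    and "connected_graph w"
    and "K > 0"
    and "CD_inf w m K"
    and "eigval w m (deg w x) = K"
    and "Lap w m f x = - K * f x"
  shows "\<exists>\<phi>. (\<forall>y. - Lap w m \<phi> y = K * \<phi> y) \<and> (\<forall>y\<in>ball1 w x. \<phi> y = f y)"
proof -
  note G = assms(1) and C = assms(2) and Kp = assms(3) and CD = assms(4)
  define B1 where "B1 = ball1 w x"
  define d where "d = deg w x"
  define E where "E = eigspace w m K"
  define Rs :: "real^'v \<Rightarrow> real^'v" where "Rs g = (\<chi> y. if y \<in> B1 then g $ y else 0)" for g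
  define U :: "(real^'v) set" where "U = {g. \<forall>y. y \<notin> B1 \<longrightarrow> g $ y = 0}"
  define Cst where "Cst = {g \<in> U. Lap w m (vec_nth g) x + K * g $ x = 0}"
  have xB: "x \<in> B1" unfolding B1_def ball1_def by simp
  have linR: "linear Rs" unfolding Rs_def by (rule linearI) (auto simp: vec_eq_iff)
  have sU: "subspace U" unfolding U_def subspace_def by auto
  have nth_add: "vec_nth (a + b) = (\<lambda>y. a $ y + b $ y)" for a b :: "real^'v" by auto
  have nth_scale: "vec_nth (c *\<^sub>R a) = (\<lambda>y. c * a $ y)" for c and a :: "real^'v" by auto
  have sU': "0 \<in> U" "\<And>a b. a \<in> U \<Longrightarrow> b \<in> U \<Longrightarrow> a + b \<in> U" "\<And>c a. a \<in> U \<Longrightarrow> c *\<^sub>R a \<in> U"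
    using sU unfolding subspace_def by auto
  have sC: "subspace Cst" unfolding subspace_def
  proof (intro conjI ballI allI)
    show "0 \<in> Cst" unfolding Cst_def using sU' by (simp add: Lap_def)
    fix a b assume ab: "a \<in> Cst" "b \<in> Cst"
    then have "(Lap w m (vec_nth a) x + K * a $ x) + (Lap w m (vec_nth b) x + K * b $ x) = 0" unfolding Cst_def by simp
    then have "Lap w m (vec_nth (a + b)) x + K * (a + b) $ x = 0" by (simp add: nth_add Lap_add algebra_simps)
    then show "a + b \<in> Cst" using ab sU' unfolding Cst_def by simp
  next
    fix c a assume a: "a \<in> Cst"
    then have "c * (Lap w m (vec_nth a) x + K * a $ x) = 0" unfolding Cst_def by simp
    then have "Lap w m (vec_nth (c *\<^sub>R a)) x + K * (c *\<^sub>R a) $ x = 0" by (simp add: nth_scale Lap_scale algebra_simps)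
    then show "c *\<^sub>R a \<in> Cst" using a sU' unfolding Cst_def by simp
  qed
  have sE: "subspace E" unfolding E_def by (rule subspace_eigspace)
  have "U \<subseteq> span ((\<lambda>y. axis y (1::real)) ` B1)"
  proof
    fix g assume gU: "g \<in> U"
    have gi: "g $ i = (\<Sum>y\<in>B1. g $ y * (if i = y then 1 else 0))" for i
    proof -
      have "(\<Sum>y\<in>B1. g $ y * (if i = y then 1 else 0)) = (\<Sum>y\<in>B1. if i = y then g $ y else 0)"
        by (intro sum.cong) auto
      also have "\<dots> = (if i \<in> B1 then g $ i else 0)" by simp
      finally show ?thesis using gU unfolding U_def by auto
    qed
    have "g = (\<Sum>y\<in>B1. (g $ y) *\<^sub>R axis y 1)"
    proof -
      have comp: "g $ i = (\<Sum>y\<in>B1. (g $ y) *\<^sub>R axis y 1) $ i" for i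
      proof -
      have "(\<Sum>y\<in>B1. (g $ y) *\<^sub>R axis y 1) $ i = (\<Sum>y\<in>B1. g $ y * (if i = y then 1 else 0))"
        unfolding sum_component by (intro sum.cong) (auto simp: axis_def)
      then show "g $ i = (\<Sum>y\<in>B1. (g $ y) *\<^sub>R axis y 1) $ i" using gi[of i] by linarith
      qed
      then show ?thesis unfolding vec_eq_iff by blast
    qed
    also have "\<dots> \<in> span ((\<lambda>y. axis y (1::real)) ` B1)"
      by (intro span_sum span_scale span_base) auto
    finally show "g \<in> span ((\<lambda>y. axis y (1::real)) ` B1)" .
  qed
  then have "dim U \<le> card ((\<lambda>y. axis y (1::real)) ` B1)" by (intro dim_le_card) simp_all
  also have "\<dots> \<le> card B1" by (rule card_image_le) simp
  finally have dU: "dim U \<le> Suc d" unfolding B1_def d_def card_ball1[OF G] .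
  obtain e where e: "e \<in> U" "e \<notin> Cst"
  proof (cases "\<exists>y0. adj w y0 x")
    case True
    then obtain y0 where y0: "adj w y0 x" by blast
    then have y0x: "y0 \<noteq> x" using wg(3)[OF G, of x] unfolding adj_def by auto
    have y0B: "y0 \<in> B1" using y0 unfolding B1_def ball1_def by simp
    let ?e = "axis y0 (1::real) :: real^'v"
    have "?e \<in> U" using y0B unfolding U_def by (auto simp: axis_def)
    moreover have "Lap w m (vec_nth ?e) x + K * ?e $ x \<noteq> 0"
    proof -
      have "(\<Sum>y\<in>UNIV. w x y * (?e $ y - ?e $ x)) = (\<Sum>y\<in>UNIV. if y = y0 then w x y else 0)"
        using y0x by (intro sum.cong refl) (auto simp: axis_def)
      also have "\<dots> = w x y0" by simp
      finally have "Lap w m (vec_nth ?e) x = w x y0 / m x" unfolding Lap_def by simp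
      moreover have "w x y0 > 0" using y0 wg(2)[OF G] unfolding adj_def by metis
      ultimately show ?thesis using y0x wg(4)[OF G, of x] by (simp add: axis_def)
    qed
    ultimately show ?thesis using that unfolding Cst_def by blast
  next
    case False
    let ?e = "axis x (1::real) :: real^'v"
    have "?e \<in> U" using xB unfolding U_def by (auto simp: axis_def)
    moreover have "Lap w m (vec_nth ?e) x + K * ?e $ x \<noteq> 0"
    proof -
      have "\<And>y. w x y = 0" using False wg(1)[OF G] wg(2)[OF G] unfolding adj_def by (metis less_eq_real_def)
      then have "Lap w m (vec_nth ?e) x = 0" unfolding Lap_def by simp
      then show ?thesis using Kp by (simp add: axis_def)
    qed
    ultimately show ?thesis using that unfolding Cst_def by blast
  qed
  have CU: "Cst \<subset> U" using e unfolding Cst_def by auto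
  have "dim Cst < dim U" by (rule dim_psubset) (use CU sC sU span_eq_iff in metis)
  then have dC: "dim Cst \<le> d" using dU by simp
  have dE: "d \<le> dim E" unfolding d_def E_def by (rule mult_K[OF G C Kp CD assms(5)])
  have eigE: "\<forall>y. - Lap w m (vec_nth v) y = K * v $ y" if "v \<in> E" for v
    using that unfolding E_def eigspace_def by simp
  have Rloc: "\<forall>y\<in>ball1 w x. vec_nth (Rs g) y = vec_nth g y" for g unfolding Rs_def B1_def by simp
  have RC: "Rs ` E \<subseteq> Cst"
  proof
    fix g assume "g \<in> Rs ` E"
    then obtain v where v: "v \<in> E" "g = Rs v" by blast
    have "Lap w m (vec_nth (Rs v)) x = Lap w m (vec_nth v) x" using Lap_local[OF G Rloc] .
    moreover have "- Lap w m (vec_nth v) x = K * v $ x" using eigE[OF v(1)] by blast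
    ultimately have "Lap w m (vec_nth (Rs v)) x + K * Rs v $ x = 0" using xB unfolding Rs_def by simp
    moreover have "Rs v \<in> U" unfolding U_def Rs_def by simp
    ultimately show "g \<in> Cst" unfolding Cst_def v(2) by simp
  qed
  have inj: "inj_on Rs (span E)" unfolding span_eq_iff[THEN iffD2, OF sE]
  proof (rule inj_onI)
    fix a b assume ab: "a \<in> E" "b \<in> E" "Rs a = Rs b"
    have abE: "a - b \<in> E" using sE ab by (simp add: subspace_diff)
    have z: "\<forall>y\<in>ball1 w x. vec_nth (a - b) y = 0"
    proof
      fix y assume "y \<in> ball1 w x"
      then have "Rs a $ y = a $ y" "Rs b $ y = b $ y" unfolding Rs_def B1_def by auto
      then show "vec_nth (a - b) y = 0" using ab(3) by simp
    qed
    have "\<And>y. vec_nth (a - b) y = 0" using eigK_ball_zero[OF G C CD eigE[OF abE] z] by blast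
    then show "a = b" by (simp add: vec_eq_iff)
  qed
  have "dim (Rs ` E) = dim E" by (rule dim_image_eq[OF linR inj])
  then have "span (Rs ` E) = span Cst" using dim_eq_span[OF RC] dC dE by simp
  moreover have "subspace (Rs ` E)" by (rule linear_subspace_image[OF linR sE])
  ultimately have RE: "Rs ` E = Cst" using sC span_eq_iff by metis
  define F :: "real^'v" where "F = vec_lambda f"
  have nthF: "vec_nth F = f" unfolding F_def by (simp add: fun_eq_iff)
  have "Rs F \<in> Cst"
  proof -
    have "Lap w m (vec_nth (Rs F)) x = Lap w m f x" using Lap_local[OF G Rloc[of F]] nthF by simp
    then have "Lap w m (vec_nth (Rs F)) x + K * Rs F $ x = 0" using assms(6) xB nthF unfolding Rs_def by simp
    moreover have "Rs F \<in> U" unfolding U_def Rs_def by simp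
    ultimately show ?thesis unfolding Cst_def by simp
  qed
  then obtain v where v: "v \<in> E" "Rs v = Rs F" using RE by (metis imageE)
  show ?thesis
  proof (intro exI[of _ "vec_nth v"] conjI)
    show "\<forall>y. - Lap w m (vec_nth v) y = K * vec_nth v y" using eigE[OF v(1)] by simp
    show "\<forall>y\<in>ball1 w x. vec_nth v y = f y"
    proof
      fix y assume "y \<in> ball1 w x"
      then have "Rs v $ y = v $ y" "Rs F $ y = f y" unfolding Rs_def B1_def using nthF by auto
      then show "vec_nth v y = f y" using v(2) by simp
    qed
  qed
qed

end
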